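(* Let $q$ be an odd prime power, $d$ an even positive integer, and $A\subset\mathbb F_q^d$. Let $\mathcal{ZR}(A)$ be the number of pairs $(x,y)\in A\times A$ with $\|x-y\|=0$, and let $\Omega^0(A)=\sum_{m\in\mathbb F_q^d:\ \|m\|=0}|\widehat A(m)|^2$. \begin{enumerate} \item If $d\equiv 2\pmod 4$ and $q\equiv 3\pmod 4$, then $$\frac{\mathcal{ZR}(A)}{2}=\frac{|A|^2}{2q}-\frac{q^{\frac{3d}{2}}}{2}\Omega^0(A)+\frac{q^{\frac{d-2}{2}}|A|}{2}.$$ \item If $d\equiv 0\pmod 4$, or $d\equiv 2\pmod 4$ and $q\equiv 1\pmod 4$, then $$\frac{\mathcal{ZR}(A)}{2}=\frac{|A|^2}{2q}+\frac{q^{\frac{3d}{2}}}{2}\Omega^0(A)-\frac{q^{\frac{d-2}{2}}|A|}{2}.$$ \end{enumerate}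
   Context: For $x\in\mathbb F_q^d$, $\|x\|=x_1^2+\cdots+x_d^2$. $\chi$ is the canonical nontrivial additive character of $\mathbb F_q$, and for $A\subset\mathbb F_q^d$, $\widehat{A}(m)=q^{-d}\sum_{x\in A}\chi(-m\cdot x)$ is the Fourier transform of the indicator function of $A$. *)

theory Defs
  imports "HOL-Analysis.Analysis"
begin

text \<open>Finite field 'a = F_q, q = CARD('a) = p^r with p = CHAR('a).\<close>

definition ff_degree :: "'a::{field,finite} itself \<Rightarrow> nat" where
  "ff_degree _ = (THE r. CHAR('a) ^ r = CARD('a))"

text \<open>Absolute trace F_q -> F_p (as an element of F_q lying in the prime field).\<close>
definition ff_trace :: "'a::{field,finite} \<Rightarrow> 'a" where
  "ff_trace x = (\<Sum>i<ff_degree TYPE('a). x ^ (CHAR('a) ^ i))"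

definition ff_trace_nat :: "'a::{field,finite} \<Rightarrow> nat" where
  "ff_trace_nat x = (THE k. k < CHAR('a) \<and> of_nat k = ff_trace x)"

definition canon_char :: "'a::{field,finite} \<Rightarrow> complex" where
  "canon_char x = cis (2 * pi * real (ff_trace_nat x) / real CHAR('a))"

definition qnorm :: "'a::{field,finite} ^ 'n \<Rightarrow> 'a" where
  "qnorm x = (\<Sum>i\<in>UNIV. (x $ i)^2)"

definition dotp :: "'a::{field,finite} ^ 'n \<Rightarrow> 'a ^ 'n \<Rightarrow> 'a" where
  "dotp m x = (\<Sum>i\<in>UNIV. m $ i * x $ i)"

definition ff_fourier :: "('a::{field,finite} ^ 'n::finite) set \<Rightarrow> 'a ^ 'n \<Rightarrow> complex" where
  "ff_fourier A m = (1 / of_nat CARD('a) ^ CARD('n)) * (\<Sum>x\<in>A. canon_char (- dotp m x))"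

definition ZR :: "('a::{field,finite} ^ 'n::finite) set \<Rightarrow> nat" where
  "ZR A = card {(x, y). x \<in> A \<and> y \<in> A \<and> qnorm (x - y) = 0}"

definition Omega0 :: "('a::{field,finite} ^ 'n::finite) set \<Rightarrow> real" where
  "Omega0 A = (\<Sum>m\<in>{m. qnorm m = 0}. (cmod (ff_fourier A m))^2)"

end

theory Submission
  imports Defs "HOL-Computational_Algebra.Primes" "HOL-Computational_Algebra.Polynomial"
begin


lemma ff_char_prime: "prime CHAR('a::{field,finite})"
  by (simp add: finite_imp_CHAR_pos prime_CHAR_semidom)

lemma ff_char_ge2: "CHAR('a::{field,finite}) \<ge> 2"
  using ff_char_prime prime_ge_2_nat by blast

lemma ff_card_gt1: "CARD('a::{field,finite}) > 1"
proof -
  have "card {0::'a, 1} \<le> CARD('a)" by (rule card_mono) auto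
  thus ?thesis by simp
qed

lemma ff_of_nat_mod: "(of_nat (a mod CHAR('a)) :: 'a::{field,finite}) = of_nat a"
proof -
  have "(of_nat a :: 'a) = of_nat (a mod CHAR('a) + CHAR('a) * (a div CHAR('a)))" by simp
  also have "\<dots> = of_nat (a mod CHAR('a))" by (simp only: of_nat_add of_nat_mult of_nat_CHAR) simp
  finally show ?thesis by simp
qed

lemma ff_of_nat_inj_lt:
  assumes "a < CHAR('a)" "b < CHAR('a)" "(of_nat a :: 'a::{field,finite}) = of_nat b"
  shows "a = b"
proof (rule ccontr)
  assume ne: "a \<noteq> b"
  show False
  proof (cases "a < b")
    case True
    then have "CHAR('a) dvd (b - a)" using assms(3) of_nat_eq_iff_char_dvd[of a b, where 'a='a] by simp
    moreover have "b - a < CHAR('a)" "b - a > 0" using assms True by auto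
    ultimately show False using nat_dvd_not_less by blast
  next
    case False
    then have "b < a" using ne by auto
    then have "CHAR('a) dvd (a - b)" using assms(3) of_nat_eq_iff_char_dvd[of b a, where 'a='a] by simp
    moreover have "a - b < CHAR('a)" "a - b > 0" using assms \<open>b < a\<close> by auto
    ultimately show False using nat_dvd_not_less by blast
  qed
qed

lemma ff_of_nat_eq_iff: "(of_nat a :: 'a::{field,finite}) = of_nat b \<longleftrightarrow> a mod CHAR('a) = b mod CHAR('a)"
proof
  assume "(of_nat a :: 'a) = of_nat b"
  hence "(of_nat (a mod CHAR('a)) :: 'a) = of_nat (b mod CHAR('a))" by (simp add: ff_of_nat_mod)
  thus "a mod CHAR('a) = b mod CHAR('a)"
    by (rule ff_of_nat_inj_lt[rotated 2]) (use ff_char_ge2[where 'a='a] in auto)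
next
  assume "a mod CHAR('a) = b mod CHAR('a)"
  hence "(of_nat (a mod CHAR('a)) :: 'a) = of_nat (b mod CHAR('a))" by simp
  thus "(of_nat a :: 'a) = of_nat b" by (simp add: ff_of_nat_mod)
qed

lemma ff_of_nat_pow_char: "(of_nat k :: 'a::{field,finite}) ^ CHAR('a) = of_nat k"
proof (induction k)
  case 0
  then show ?case using ff_char_ge2[where 'a='a] by simp
next
  case (Suc k)
  have "(of_nat (Suc k) :: 'a) ^ CHAR('a) = (of_nat k + 1) ^ CHAR('a)" by (simp add: add.commute)
  also have "\<dots> = of_nat k ^ CHAR('a) + 1 ^ CHAR('a)"
    by (rule freshmans_dream) (auto simp: ff_char_prime)
  also have "\<dots> = of_nat (Suc k)" using Suc by simp
  finally show ?case .
qed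

lemma ff_power_card: "(x :: 'a::{field,finite}) ^ CARD('a) = x"
proof (cases "x = 0")
  case False
  have "x * (\<Prod>y\<in>UNIV-{0}. x * y) = x * x ^ (card (UNIV :: 'a set) - 1) * \<Prod>(UNIV-{0})"
    by (simp add: prod.distrib mult_ac)
  also have "x * x ^ (card (UNIV :: 'a set) - 1) = x ^ Suc (card (UNIV :: 'a set) - 1)"
    by (subst power_Suc) auto
  also have "Suc (card (UNIV :: 'a set) - 1) = card (UNIV :: 'a set)"
    using finite_UNIV_card_ge_0[where ?'a = 'a] by simp
  also have "(\<Prod>y\<in>UNIV-{0}. x * y) = (\<Prod>y\<in>UNIV-{0}. y)"
    by (rule prod.reindex_bij_witness[of _ "\<lambda>y. y / x" "\<lambda>y. x * y"]) (use False in auto)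
  finally show ?thesis
    by simp
qed (use finite_UNIV_card_ge_0[where ?'a = 'a] in auto)

lemma ff_prime_field:
  fixes y :: "'a::{field,finite}"
  assumes "y ^ CHAR('a) = y"
  shows "\<exists>k<CHAR('a). y = of_nat k"
proof -
  let ?p = "CHAR('a)"
  define P :: "'a poly" where "P = monom 1 ?p - [:0, 1:]"
  have p2: "?p \<ge> 2" by (rule ff_char_ge2)
  have "coeff P ?p = 1" using p2 by (simp add: P_def coeff_monom coeff_pCons split: nat.split)
  hence P0: "P \<noteq> 0" by auto
  have degP: "degree P \<le> ?p" unfolding P_def
    by (intro degree_diff_le) (use p2 in \<open>auto simp: degree_monom_le\<close>)
  have roots: "{x. poly P x = 0} = {x::'a. x ^ ?p = x}" by (auto simp: P_def poly_monom)
  define S where "S = (of_nat ` {..<?p} :: 'a set)"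
  have cS: "card S = ?p" unfolding S_def
    by (subst card_image) (auto intro!: inj_onI intro: ff_of_nat_inj_lt)
  have SR: "S \<subseteq> {x::'a. x ^ ?p = x}" unfolding S_def using ff_of_nat_pow_char by auto
  have "card {x::'a. x ^ ?p = x} \<le> ?p" using card_poly_roots_bound[OF P0] degP unfolding roots by linarith
  hence "S = {x::'a. x ^ ?p = x}" using SR cS card_mono[OF finite SR] by (intro card_subset_eq) auto
  thus ?thesis using assms unfolding S_def by auto
qed



definition psub :: "'a::{field,finite} set \<Rightarrow> bool" where
  "psub H \<longleftrightarrow> 0 \<in> H \<and> (\<forall>x\<in>H. \<forall>y\<in>H. x + y \<in> H) \<and> (\<forall>x\<in>H. \<forall>c::nat. of_nat c * x \<in> H)"

lemma of_nat_char_minus1: "(of_nat (CHAR('a) - 1) :: 'a::{field,finite}) = -1"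
  using ff_char_ge2[where 'a='a] by (simp add: of_nat_diff)

lemma psub_neg: "psub H \<Longrightarrow> x \<in> H \<Longrightarrow> - x \<in> H"
  unfolding psub_def using of_nat_char_minus1 by (metis mult_minus1)

lemma psub_ext:
  fixes H :: "'a::{field,finite} set"
  assumes H: "psub H" and x: "x \<notin> H"
  defines "H' \<equiv> (\<lambda>(h,j). h + of_nat j * x) ` (H \<times> {..<CHAR('a)})"
  shows "psub H' \<and> card H' = CHAR('a) * card H \<and> H \<subseteq> H' \<and> x \<in> H'"
proof -
  let ?p = "CHAR('a)"
  have p2: "?p \<ge> 2" by (rule ff_char_ge2)
  have sub: "H \<subseteq> H'"
  proof
    fix h assume "h \<in> H"
    hence "(h, 0) \<in> H \<times> {..<?p}" using p2 by auto
    thus "h \<in> H'" unfolding H'_def by (force intro: image_eqI)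
  qed
  have xin: "x \<in> H'"
  proof -
    have "(0, 1) \<in> H \<times> {..<?p}" using p2 H by (auto simp: psub_def)
    moreover have "x = (\<lambda>(h,j). h + of_nat j * x) (0, 1)" by simp
    ultimately show ?thesis unfolding H'_def by blast
  qed
  have ps: "psub H'"
    unfolding psub_def
  proof (intro conjI ballI allI)
    show "0 \<in> H'" using sub H by (auto simp: psub_def)
  next
    fix a b assume a: "a \<in> H'" and b: "b \<in> H'"
    then obtain h1 j1 h2 j2 where h1: "h1 \<in> H" and h2: "h2 \<in> H" and
      ab: "a = h1 + of_nat j1 * x" "b = h2 + of_nat j2 * x"
      unfolding H'_def by auto
    have "a + b = (h1 + h2) + of_nat ((j1 + j2) mod ?p) * x"
      unfolding ab ff_of_nat_mod by (simp add: algebra_simps)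
    moreover have "h1 + h2 \<in> H" using H h1 h2 by (auto simp: psub_def)
    moreover have "(j1 + j2) mod ?p < ?p" using p2 by auto
    ultimately show "a + b \<in> H'" unfolding H'_def by force
  next
    fix a and c :: nat assume a: "a \<in> H'"
    then obtain h1 j1 where h1: "h1 \<in> H" and ab: "a = h1 + of_nat j1 * x"
      unfolding H'_def by auto
    have "of_nat c * a = of_nat c * h1 + of_nat ((c * j1) mod ?p) * x"
      unfolding ab ff_of_nat_mod by (simp add: algebra_simps)
    moreover have "of_nat c * h1 \<in> H" using H h1 by (auto simp: psub_def)
    moreover have "(c * j1) mod ?p < ?p" using p2 by auto
    ultimately show "of_nat c * a \<in> H'" unfolding H'_def by force
  qed
  have inj: "inj_on (\<lambda>(h,j). h + of_nat j * x) (H \<times> {..<?p})"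
  proof (rule inj_onI, clarify)
    fix h1 j1 h2 j2
    assume h1: "h1 \<in> H" and j1: "j1 < ?p" and h2: "h2 \<in> H" and j2: "j2 < ?p"
      and eq: "h1 + of_nat j1 * x = h2 + of_nat j2 * (x::'a)"
    have "j1 = j2"
    proof (rule ccontr)
      assume ne: "j1 \<noteq> j2"
      define c where "c = (j1 + (?p - j2)) mod ?p"
      have "(of_nat c :: 'a) = of_nat (j1 + (?p - j2))" unfolding c_def by (rule ff_of_nat_mod)
      also have "\<dots> = of_nat j1 - of_nat j2" using j2 by (simp add: of_nat_diff)
      finally have oc: "(of_nat c :: 'a) = of_nat j1 - of_nat j2" .
      have c0: "(of_nat c :: 'a) \<noteq> 0"
      proof
        assume "(of_nat c :: 'a) = 0"
        hence "(of_nat j1 :: 'a) = of_nat j2" using oc by simp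
        thus False using ff_of_nat_inj_lt[OF j1 j2] ne by blast
      qed
      have "of_nat c * x = of_nat j1 * x - of_nat j2 * x" by (simp add: oc left_diff_distrib)
      also have "\<dots> = (h1 + of_nat j1 * x) - h1 - of_nat j2 * x" by simp
      also have "\<dots> = (h2 + of_nat j2 * x) - h1 - of_nat j2 * x" using eq by simp
      also have "\<dots> = h2 + (- h1)" by simp
      finally have "of_nat c * x = h2 + (- h1)" .
      hence cx: "of_nat c * x \<in> H" using H h1 h2 psub_neg[OF H h1] by (auto simp: psub_def)
      define y where "y = inverse (of_nat c :: 'a)"
      have "y ^ ?p = y" unfolding y_def by (simp add: power_inverse ff_of_nat_pow_char)
      then obtain k where "y = of_nat k" using ff_prime_field by blast
      hence "y * (of_nat c * x) \<in> H" using H cx by (auto simp: psub_def)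
      moreover have "y * (of_nat c * x) = x" unfolding y_def using c0 by simp
      ultimately show False using x by simp
    qed
    thus "h1 = h2 \<and> j1 = j2" using eq by simp
  qed
  have "card H' = card (H \<times> {..<?p})" unfolding H'_def by (rule card_image[OF inj])
  also have "\<dots> = ?p * card H" by (simp add: card_cartesian_product)
  finally show ?thesis using ps sub xin by blast
qed

lemma psub_card:
  fixes H :: "'a::{field,finite} set"
  shows "psub H \<Longrightarrow> \<exists>k. card H * CHAR('a) ^ k = CARD('a)"
proof (induction "card (UNIV - H)" arbitrary: H rule: less_induct)
  case less
  show ?case
  proof (cases "H = UNIV")
    case True
    then show ?thesis by (intro exI[of _ 0]) simp
  next
    case False
    then obtain x where x: "x \<notin> H" by auto
    define H' where "H' = (\<lambda>(h,j). h + of_nat j * x) ` (H \<times> {..<CHAR('a)})"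
    have e: "psub H' \<and> card H' = CHAR('a) * card H \<and> H \<subseteq> H' \<and> x \<in> H'"
      unfolding H'_def by (rule psub_ext[OF less.prems x])
    have "UNIV - H' \<subset> UNIV - H" using e x by auto
    hence "card (UNIV - H') < card (UNIV - H)" by (intro psubset_card_mono) auto
    then obtain k where "card H' * CHAR('a) ^ k = CARD('a)" using less.hyps e by blast
    hence "card H * CHAR('a) ^ Suc k = CARD('a)" using e by (simp add: algebra_simps)
    thus ?thesis by blast
  qed
qed

lemma ff_card_char_pow: "\<exists>r. CHAR('a) ^ r = CARD('a::{field,finite})"
proof -
  have "psub {0::'a}" by (simp add: psub_def)
  from psub_card[OF this] show ?thesis by simp
qed

lemma ff_degree: "CHAR('a) ^ ff_degree TYPE('a) = CARD('a::{field,finite})"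
proof -
  obtain r where r: "CHAR('a) ^ r = CARD('a)" using ff_card_char_pow by blast
  have "\<exists>!r. CHAR('a) ^ r = CARD('a)"
  proof (rule ex1I[of _ r])
    fix s assume "CHAR('a) ^ s = CARD('a)"
    thus "s = r" using r ff_char_ge2[where 'a='a] by (metis One_nat_def Suc_1 Suc_le_lessD power_inject_exp)
  qed (rule r)
  thus ?thesis unfolding ff_degree_def by (rule theI')
qed

lemma ff_degree_pos: "ff_degree TYPE('a::{field,finite}) > 0"
  using ff_degree[where 'a='a] ff_card_gt1[where 'a='a] by (cases "ff_degree TYPE('a)") auto

lemma ff_trace_add: "ff_trace (x + y) = ff_trace x + ff_trace (y::'a::{field,finite})"
  unfolding ff_trace_def
  by (simp add: sum.distrib freshmans_dream'[OF ff_char_prime])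

lemma ff_trace_pow: "ff_trace (x::'a::{field,finite}) ^ CHAR('a) = ff_trace x"
proof -
  let ?p = "CHAR('a)" and ?r = "ff_degree TYPE('a)"
  have "ff_trace x ^ ?p = (\<Sum>i<?r. (x ^ (?p ^ i)) ^ ?p)"
    unfolding ff_trace_def by (rule freshmans_dream_sum[OF ff_char_prime refl])
  also have "\<dots> = (\<Sum>i<?r. x ^ (?p ^ Suc i))"
    by (simp add: power_mult[symmetric] mult.commute)
  also have "\<dots> = (\<Sum>i<Suc ?r. x ^ (?p ^ i)) - x"
    by (subst sum.lessThan_Suc_shift) simp
  also have "\<dots> = (\<Sum>i<?r. x ^ (?p ^ i)) + x ^ (?p ^ ?r) - x"
    by simp
  also have "x ^ (?p ^ ?r) = x" by (simp add: ff_degree ff_power_card)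
  finally show ?thesis unfolding ff_trace_def by simp
qed

lemma ff_trace_nat: "ff_trace_nat x < CHAR('a) \<and> of_nat (ff_trace_nat x) = ff_trace (x::'a::{field,finite})"
proof -
  obtain k where k: "k < CHAR('a)" "ff_trace x = of_nat k" using ff_prime_field[OF ff_trace_pow] by blast
  have "\<exists>!k. k < CHAR('a) \<and> of_nat k = ff_trace x"
    using k ff_of_nat_inj_lt[where 'a='a] by (intro ex1I[of _ k]) auto
  thus ?thesis unfolding ff_trace_nat_def by (rule theI')
qed

lemma ff_trace_nonzero: "\<exists>x::'a::{field,finite}. ff_trace x \<noteq> 0"
proof (rule ccontr)
  assume "\<not> (\<exists>x::'a. ff_trace x \<noteq> 0)"
  hence all: "\<forall>x::'a. ff_trace x = 0" by simp
  let ?p = "CHAR('a)" and ?r = "ff_degree TYPE('a)"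
  define P :: "'a poly" where "P = (\<Sum>i<?r. monom 1 (?p ^ i))"
  have r: "?r > 0" by (rule ff_degree_pos)
  have p2: "?p \<ge> 2" by (rule ff_char_ge2)
  have "coeff P (?p ^ (?r - 1)) = (\<Sum>i<?r. if i = ?r - 1 then 1 else 0)"
    unfolding P_def coeff_sum coeff_monom
    by (intro sum.cong refl) (use p2 in \<open>auto simp: power_inject_exp\<close>)
  also have "\<dots> = 1" using r by simp
  finally have P0: "P \<noteq> 0" by auto
  have degP: "degree P \<le> ?p ^ (?r - 1)" unfolding P_def
    by (intro degree_sum_le) (use p2 in \<open>auto intro!: order_trans[OF degree_monom_le] power_increasing\<close>)
  have "{x. poly P x = 0} = UNIV" using all by (auto simp: P_def poly_sum poly_monom ff_trace_def)
  hence "CARD('a) \<le> ?p ^ (?r - 1)" using card_poly_roots_bound[OF P0] degP by simp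
  moreover have "?p ^ (?r - 1) < ?p ^ ?r" using p2 r by (intro power_strict_increasing) auto
  ultimately show False using ff_degree[where 'a='a] by simp
qed



lemma canon_char_add: "canon_char (x + y) = canon_char x * canon_char (y::'a::{field,finite})"
proof -
  let ?p = "CHAR('a)"
  define a where "a = ff_trace_nat x"
  define b where "b = ff_trace_nat y"
  define c where "c = ff_trace_nat (x + y)"
  have p2: "?p \<ge> 2" by (rule ff_char_ge2)
  have "(of_nat c :: 'a) = of_nat a + of_nat b"
    unfolding a_def b_def c_def using ff_trace_nat ff_trace_add by metis
  hence "(of_nat c :: 'a) = of_nat (a + b)" by simp
  hence "c mod ?p = (a + b) mod ?p" using ff_of_nat_eq_iff by blast
  moreover have "c < ?p" unfolding c_def using ff_trace_nat by blast
  ultimately have cm: "c = (a + b) mod ?p" by simp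
  define e where "e = (a + b) div ?p"
  have ab: "real (a + b) = real c + real ?p * real e"
    unfolding cm e_def by (metis mod_mult_div_eq of_nat_add of_nat_mult add.commute)
  have "canon_char x * canon_char y = cis (2 * pi * real (a + b) / real ?p)"
    unfolding canon_char_def a_def b_def cis_mult by (simp add: add_divide_distrib algebra_simps)
  also have "2 * pi * real (a + b) / real ?p = 2 * pi * real c / real ?p + 2 * pi * real e"
    unfolding ab using p2 by (simp add: field_simps)
  also have "cis \<dots> = cis (2 * pi * real c / real ?p) * cis (2 * pi * real e)"
    by (rule cis_mult[symmetric])
  also have "cis (2 * pi * real e) = 1" by (rule cis_multiple_2pi) simp
  finally show ?thesis unfolding canon_char_def c_def by simp
qed

lemma canon_char_norm [simp]: "norm (canon_char x) = 1"
  by (simp add: canon_char_def)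

lemma canon_char_0 [simp]: "canon_char (0::'a::{field,finite}) = 1"
proof -
  have "canon_char (0::'a) = canon_char ((0::'a) + 0)" by simp
  also have "\<dots> = canon_char (0::'a) * canon_char (0::'a)" by (rule canon_char_add)
  finally have "canon_char (0::'a) = canon_char (0::'a) * canon_char (0::'a)" .
  moreover have "canon_char (0::'a) \<noteq> 0" by (metis canon_char_norm norm_zero zero_neq_one)
  ultimately show ?thesis by simp
qed

lemma canon_char_neg: "canon_char (- x) = cnj (canon_char (x::'a::{field,finite}))"
proof -
  have "canon_char (- x) * canon_char x = 1" using canon_char_add[of "-x" x] by simp
  moreover have "canon_char x * cnj (canon_char x) = 1"
    using complex_norm_square[of "canon_char x"] by simp
  ultimately show ?thesis by (metis mult.commute mult.left_neutral mult.assoc)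
qed

lemma canon_char_sum: "canon_char (\<Sum>i\<in>I. f i) = (\<Prod>i\<in>I. canon_char (f i :: 'a::{field,finite}))"
  by (induction I rule: infinite_finite_induct) (auto simp: canon_char_add)

lemma canon_char_nontriv: "\<exists>a::'a::{field,finite}. canon_char a \<noteq> 1"
proof -
  obtain x :: 'a where x: "ff_trace x \<noteq> 0" using ff_trace_nonzero by blast
  let ?p = "CHAR('a)"
  define k where "k = ff_trace_nat x"
  have k1: "k < ?p" unfolding k_def using ff_trace_nat[of x] by auto
  have k2: "k \<noteq> 0"
  proof
    assume "k = 0"
    hence "ff_trace x = 0" unfolding k_def using ff_trace_nat[of x] by (metis of_nat_0)
    thus False using x by simp
  qed
  note k = k1 k2
  have p2: "?p \<ge> 2" by (rule ff_char_ge2)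
  have "canon_char x \<noteq> 1"
  proof
    assume "canon_char x = 1"
    hence "cos (2 * pi * real k / real ?p) = 1" unfolding canon_char_def k_def
      by (metis Re_complex_of_real complex_of_real_def cis.sel(1) one_complex.sel(1))
    then obtain n :: nat where "2 * pi * real k / real ?p = real n * 2 * pi \<or> 2 * pi * real k / real ?p = - (real n * 2 * pi)"
      by (auto simp: cos_one_2pi)
    moreover have "2 * pi * real k / real ?p = 2 * pi * (real k / real ?p)" by simp
    ultimately have "2 * pi * (real k / real ?p) = 2 * pi * real n \<or> 2 * pi * (real k / real ?p) = 2 * pi * (- real n)"
      by (simp add: mult.commute mult.left_commute)
    hence "real k / real ?p = real n \<or> real k / real ?p = - real n"
      using pi_gt_zero by (metis mult_left_cancel mult_eq_0_iff zero_neq_numeral less_irrefl)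
    moreover have "0 < real k / real ?p" "real k / real ?p < 1" using k p2 by auto
    ultimately show False by (cases n) auto
  qed
  thus ?thesis by blast
qed

lemma sum_bij_UNIV: "bij g \<Longrightarrow> (\<Sum>x\<in>UNIV. f (g x)) = (\<Sum>x\<in>UNIV. f x)"
  by (rule sum.reindex_bij_betw) simp

lemma canon_char_orth:
  "(\<Sum>t\<in>UNIV. canon_char (c * t)) = (if c = 0 then of_nat CARD('a) else (0::complex))"
  for c :: "'a::{field,finite}"
proof (cases "c = 0")
  case False
  have b: "bij (\<lambda>t. c * t)" using False
    by (intro bij_betw_byWitness[of _ "\<lambda>t. t / c"]) auto
  have "(\<Sum>t\<in>UNIV. canon_char (c * t)) = (\<Sum>t\<in>UNIV. canon_char (t::'a))"
    by (rule sum_bij_UNIV[OF b, where f=canon_char])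
  also have "\<dots> = 0"
  proof -
    obtain a :: 'a where a: "canon_char a \<noteq> 1" using canon_char_nontriv by blast
    have b2: "bij (\<lambda>t. t + a)" by (intro bij_betw_byWitness[of _ "\<lambda>t. t - a"]) auto
    have "(\<Sum>t\<in>UNIV. canon_char (t::'a)) = (\<Sum>t\<in>UNIV. canon_char (t + a))"
      by (rule sum_bij_UNIV[OF b2, where f=canon_char, symmetric])
    also have "\<dots> = canon_char a * (\<Sum>t\<in>UNIV. canon_char (t::'a))"
      by (simp add: canon_char_add sum_distrib_left mult.commute)
    finally have "(1 - canon_char a) * (\<Sum>t\<in>UNIV. canon_char (t::'a)) = 0" by (simp add: algebra_simps)
    thus ?thesis using a by simp
  qed
  finally show ?thesis using False by simp
qed simp



lemma two_nz: "odd CARD('a::{field,finite}) \<Longrightarrow> (2::'a) \<noteq> 0"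
proof
  assume odd: "odd CARD('a)" and z: "(2::'a) = 0"
  have "(of_nat 2 :: 'a) = 0" using z by simp
  hence "CHAR('a) dvd 2" by (simp only: of_nat_eq_0_iff_char_dvd)
  hence c2: "CHAR('a) = 2" using ff_char_ge2[where 'a='a] by (metis dvd_imp_le le_antisym zero_less_numeral)
  have "CHAR('a) dvd CARD('a)"
    using ff_degree[where 'a='a] ff_degree_pos[where 'a='a] by (metis dvd_power)
  thus False using odd c2 by simp
qed

definition sqs :: "'a::{field,finite} set" where
  "sqs = {c. c \<noteq> 0 \<and> (\<exists>s. c = s^2)}"

lemma sum_sq_fiber:
  fixes h :: "'a::{field,finite} \<Rightarrow> 'b::comm_semiring_1"
  assumes odd: "odd CARD('a)"
  shows "(\<Sum>s\<in>UNIV-{0}. h (s^2)) = 2 * (\<Sum>c\<in>sqs. h c)"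
proof -
  have img: "(\<lambda>s. s^2) ` (UNIV - {0::'a}) = sqs" unfolding sqs_def by auto
  have "(\<Sum>s\<in>UNIV-{0}. h (s^2)) = (\<Sum>c\<in>(\<lambda>s. s^2) ` (UNIV - {0::'a}). \<Sum>s\<in>{x. x \<in> UNIV-{0} \<and> x^2 = c}. h (s^2))"
    by (rule sum.image_gen) simp
  also have "\<dots> = (\<Sum>c\<in>sqs. 2 * h c)" unfolding img
  proof (rule sum.cong[OF refl])
    fix c assume "c \<in> (sqs :: 'a set)"
    then obtain a where a: "a \<noteq> 0" "c = a^2" unfolding sqs_def by auto
    have "{x. x \<in> UNIV-{0} \<and> x^2 = c} = {a, -a}" using a by (auto simp: power2_eq_iff)
    moreover have "a \<noteq> -a" using a two_nz[OF odd] by (metis add_eq_0_iff2 mult_2 mult_eq_0_iff)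
    ultimately have "(\<Sum>s\<in>{x. x \<in> UNIV-{0} \<and> x^2 = c}. h (s^2)) = h (a^2) + h ((-a)^2)" by simp
    thus "(\<Sum>s\<in>{x. x \<in> UNIV-{0} \<and> x^2 = c}. h (s^2)) = 2 * h c" using a by (simp add: mult_2)
  qed
  also have "\<dots> = 2 * (\<Sum>c\<in>sqs. h c)" by (simp add: sum_distrib_left)
  finally show ?thesis .
qed

lemma card_sqs:
  assumes odd: "odd CARD('a::{field,finite})"
  shows "CARD('a) - 1 = 2 * card (sqs :: 'a set)"
proof -
  have "(\<Sum>s\<in>UNIV-{0::'a}. (\<lambda>_. 1::nat) (s^2)) = 2 * (\<Sum>c\<in>(sqs::'a set). (\<lambda>_. 1::nat) c)"
    by (rule sum_sq_fiber[OF odd])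
  thus ?thesis by simp
qed

lemma even_card_involution:
  assumes "finite A" "\<And>x. x \<in> A \<Longrightarrow> f x \<in> A" "\<And>x. x \<in> A \<Longrightarrow> f (f x) = x" "\<And>x. x \<in> A \<Longrightarrow> f x \<noteq> x"
  shows "even (card A)"
  using assms
proof (induction "card A" arbitrary: A rule: less_induct)
  case less
  show ?case
  proof (cases "A = {}")
    case False
    then obtain x where x: "x \<in> A" by auto
    define A' where "A' = A - {x, f x}"
    have fx: "f x \<in> A" "f x \<noteq> x" using less.prems x by auto
    have sub: "{x, f x} \<subseteq> A" using x fx by auto
    have c2: "card {x, f x} = 2" using fx by simp
    have "card A' = card A - 2" unfolding A'_def using card_Diff_subset[OF _ sub] c2 by simp
    moreover have "card A \<ge> 2" using card_mono[OF less.prems(1) sub] c2 by simp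
    ultimately have cA: "card A = card A' + 2" by simp
    have "even (card A')"
    proof (rule less.hyps)
      show "card A' < card A" using cA by simp
      show "finite A'" unfolding A'_def using less.prems by simp
      fix y assume y: "y \<in> A'"
      have yA: "y \<in> A" "y \<noteq> x" "y \<noteq> f x" using y unfolding A'_def by auto
      have "f y \<noteq> x"
      proof
        assume "f y = x"
        hence "f (f y) = f x" by simp
        thus False using yA less.prems(3)[of y] by simp
      qed
      moreover have "f y \<noteq> f x"
      proof
        assume "f y = f x"
        hence "f (f y) = f (f x)" by simp
        thus False using yA less.prems(3)[of y] less.prems(3)[OF x] by simp
      qed
      ultimately show "f y \<in> A'" using yA less.prems(2)[of y] unfolding A'_def by simp
      show "f (f y) = y" using yA less.prems(3) by simp
      show "f y \<noteq> y" using yA less.prems(4) by simp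
    qed
    thus ?thesis using cA by simp
  qed simp
qed

lemma minus1_sq_iff:
  assumes odd: "odd CARD('a::{field,finite})"
  shows "(\<exists>i::'a. i^2 = -1) \<longleftrightarrow> CARD('a) mod 4 = 1"
proof -
  have cq: "CARD('a) - 1 = 2 * card (sqs :: 'a set)" by (rule card_sqs[OF odd])
  have q1: "CARD('a) \<ge> 1" using ff_card_gt1[where 'a='a] by simp
  have tw: "(2::'a) \<noteq> 0" by (rule two_nz[OF odd])
  show ?thesis
  proof
    assume "\<exists>i::'a. i^2 = -1"
    then obtain i :: 'a where i: "i^2 = -1" by blast
    have "even (card (sqs :: 'a set))"
    proof (rule even_card_involution[where f = uminus])
      fix x :: 'a assume x: "x \<in> sqs"
      then obtain s where s: "x \<noteq> 0" "x = s^2" unfolding sqs_def by auto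
      have "-x = (i * s)^2" using s i by (simp add: power_mult_distrib)
      thus "-x \<in> sqs" using s unfolding sqs_def by auto
      show "- (- x) = x" by simp
      show "- x \<noteq> x"
      proof
        assume h: "- x = x"
        have "x + x = x + (- x)" using h by simp
        hence "x + x = 0" by simp
        hence "2 * x = 0" by (simp only: mult_2)
        thus False using s tw by simp
      qed
    qed simp
    then obtain k where k: "card (sqs :: 'a set) = 2 * k" by (elim evenE)
    have "CARD('a) = 4 * k + 1" using cq q1 k by arith
    thus "CARD('a) mod 4 = 1" by simp
  next
    assume m: "CARD('a) mod 4 = 1"
    show "\<exists>i::'a. i^2 = -1"
    proof (rule ccontr)
      assume ni: "\<not> (\<exists>i::'a. i^2 = -1)"
      have one: "(1::'a) \<in> sqs" unfolding sqs_def by (auto intro: exI[of _ 1])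
      have "even (card ((sqs :: 'a set) - {1}))"
      proof (rule even_card_involution[where f = inverse])
        fix x :: 'a assume x: "x \<in> sqs - {1}"
        then obtain s where s: "x \<noteq> 0" "x = s^2" "x \<noteq> 1" unfolding sqs_def by auto
        have "inverse x = (inverse s)^2" using s by (simp add: power_inverse)
        moreover have "inverse x \<noteq> 1"
        proof
          assume "inverse x = 1"
          hence "inverse (inverse x) = inverse 1" by simp
          thus False using s by simp
        qed
        ultimately show "inverse x \<in> sqs - {1}" using s unfolding sqs_def by auto
        show "inverse (inverse x) = x" by simp
        show "inverse x \<noteq> x"
        proof
          assume "inverse x = x"
          hence "x * x = x * inverse x" by simp
          also have "\<dots> = 1" using s by simp
          finally have "x * x = 1" .
          hence "(x - 1) * (x + 1) = 0" by (simp add: algebra_simps)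
          hence "x - 1 = 0 \<or> x + 1 = 0" by simp
          hence "x = 1 \<or> x = -1" by (auto simp: eq_neg_iff_add_eq_0)
          thus False using s ni by auto
        qed
      qed simp
      moreover have "card ((sqs :: 'a set) - {1}) = card (sqs :: 'a set) - 1" using one by (simp add: card_Diff_singleton)
      moreover have "card (sqs :: 'a set) \<ge> 1" using one card_gt_0_iff[of "sqs :: 'a set"] by (auto simp: Suc_le_eq)
      ultimately have "odd (card (sqs :: 'a set))" by (cases "card (sqs :: 'a set)") auto
      then obtain k where k: "card (sqs :: 'a set) = 2 * k + 1" by (elim oddE)
      have "CARD('a) = 4 * k + 3" using cq q1 k by arith
      hence "CARD('a) mod 4 = 3" by simp
      thus False using m by simp
    qed
  qed
qed

definition gs :: "'a::{field,finite} \<Rightarrow> complex" where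
  "gs t = (\<Sum>s\<in>UNIV. canon_char (t * s^2))"

lemma sum_UNIV_pair: "(\<Sum>x\<in>UNIV. \<Sum>y\<in>UNIV. f x y) = (\<Sum>p\<in>UNIV. f (fst p) (snd p))"
  for f :: "'a::finite \<Rightarrow> 'b::finite \<Rightarrow> 'c::comm_monoid_add"
  by (simp add: sum.cartesian_product UNIV_Times_UNIV[symmetric] case_prod_beta del: UNIV_Times_UNIV)

lemma tw4: "(2::'a::{field,finite}) \<noteq> 0 \<Longrightarrow> (4::'a) \<noteq> 0"
proof -
  assume tw: "(2::'a) \<noteq> 0"
  have e: "(4::'a) = 2 * 2" by simp
  show ?thesis unfolding e using tw by (simp only: mult_eq_0_iff) simp
qed

lemma half_facts:
  fixes a b :: "'a::{field,finite}"
  assumes tw: "(2::'a) \<noteq> 0"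
  shows "(a + b)/2 - (b - a)/2 = a" "(a + b)/2 + (b - a)/2 = b"
        "(a - b + (a + b))/2 = a" "(a + b - (a - b))/2 = b"
  using tw tw4[OF tw] by (simp_all add: field_simps)

lemma gs_prod:
  assumes odd: "odd CARD('a::{field,finite})" and t: "t \<noteq> (0::'a)"
  shows "gs t * gs (-t) = of_nat CARD('a)"
proof -
  have tw: "(2::'a) \<noteq> 0" by (rule two_nz[OF odd])
  have "gs t * gs (-t) = (\<Sum>s\<in>UNIV. \<Sum>u\<in>UNIV. canon_char (t * s^2) * canon_char (- t * u^2))"
    unfolding gs_def by (rule sum_product)
  also have "\<dots> = (\<Sum>p\<in>UNIV. canon_char (t * (fst p - snd p) * (fst p + snd p)))"
  proof -
    have e: "canon_char (t * s^2) * canon_char (- t * u^2) = canon_char (t * (s - u) * (s + u))" for s u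
    proof -
      have "t * (s - u) * (s + u) = t * s^2 + (- t * u^2)" by (simp add: algebra_simps power2_eq_square)
      thus ?thesis by (simp only: canon_char_add)
    qed
    show ?thesis unfolding sum_UNIV_pair e by (rule refl)
  qed
  also have "\<dots> = (\<Sum>p\<in>UNIV. canon_char (t * fst p * snd p))"
  proof -
    have b: "bij (\<lambda>p::'a\<times>'a. (fst p - snd p, fst p + snd p))"
    proof -
      have i: "inj (\<lambda>p::'a\<times>'a. (fst p - snd p, fst p + snd p))"
      proof (rule injI)
        fix p p' :: "'a \<times> 'a"
        assume eq: "(fst p - snd p, fst p + snd p) = (fst p' - snd p', fst p' + snd p')"
        have "2 * fst p = (fst p - snd p) + (fst p + snd p)" by (simp add: algebra_simps)
        also have "\<dots> = (fst p' - snd p') + (fst p' + snd p')" using eq by simp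
        also have "\<dots> = 2 * fst p'" by (simp add: algebra_simps)
        finally have "fst p = fst p'" using tw by simp
        moreover have "snd p = snd p'" using eq \<open>fst p = fst p'\<close> by simp
        ultimately show "p = p'" by (simp add: prod_eq_iff)
      qed
      thus ?thesis by (simp add: bij_def finite_UNIV_inj_surj)
    qed
    show ?thesis
      using sum_bij_UNIV[OF b, where f = "\<lambda>p. canon_char (t * fst p * snd p)"] by simp
  qed
  also have "\<dots> = (\<Sum>a\<in>UNIV. \<Sum>b\<in>UNIV. canon_char ((t * a) * b))"
    unfolding sum_UNIV_pair by simp
  also have "\<dots> = (\<Sum>a\<in>UNIV. if t * a = 0 then of_nat CARD('a) else 0)"
    by (simp only: canon_char_orth)
  also have "\<dots> = (\<Sum>a::'a\<in>UNIV. if a = 0 then of_nat CARD('a) else 0)"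
    using t by simp
  also have "\<dots> = of_nat CARD('a)" by simp
  finally show ?thesis .
qed

lemma gs_Q:
  fixes t :: "'a::{field,finite}"
  assumes odd: "odd CARD('a)"
  shows "gs t = 1 + 2 * (\<Sum>c\<in>sqs. canon_char (t * c))"
proof -
  have "gs t = canon_char (t * 0^2) + (\<Sum>s\<in>UNIV-{0}. canon_char (t * s^2))"
    unfolding gs_def by (subst sum.remove[of UNIV 0]) auto
  also have "(\<Sum>s\<in>UNIV-{0}. canon_char (t * s^2)) = 2 * (\<Sum>c\<in>sqs. canon_char (t * c))"
    by (rule sum_sq_fiber[OF odd, where h = "\<lambda>c. canon_char (t * c)"])
  finally show ?thesis by simp
qed

lemma gs_sq:
  assumes odd: "odd CARD('a::{field,finite})" and t: "t \<noteq> (0::'a)"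
  shows "gs t ^ 2 = (if \<exists>i::'a. i^2 = -1 then of_nat CARD('a) else - of_nat CARD('a))"
proof (cases "\<exists>i::'a. i^2 = -1")
  case True
  then obtain i :: 'a where i: "i^2 = -1" by blast
  have i0: "i \<noteq> 0" using i by auto
  have "gs (-t) = (\<Sum>s\<in>UNIV. canon_char (t * (i * s)^2))"
    unfolding gs_def by (intro sum.cong refl) (simp add: power_mult_distrib i)
  also have "\<dots> = gs t"
  proof -
    have b: "bij (\<lambda>s. i * s)" using i0 by (intro bij_betw_byWitness[of _ "\<lambda>s. s / i"]) auto
    show ?thesis unfolding gs_def by (rule sum_bij_UNIV[OF b, where f = "\<lambda>s. canon_char (t * s^2)"])
  qed
  finally have "gs t ^ 2 = gs t * gs (-t)" by (simp add: power2_eq_square)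
  then show ?thesis using gs_prod[OF odd t] True by simp
next
  case False
  let ?Q = "sqs :: 'a set"
  have disj: "?Q \<inter> uminus ` ?Q = {}"
  proof (rule ccontr)
    assume "?Q \<inter> uminus ` ?Q \<noteq> {}"
    then obtain x where x1: "x \<in> ?Q" and x2: "x \<in> uminus ` ?Q" by blast
    from x1 obtain s where s: "x = s^2" unfolding sqs_def by auto
    from x2 obtain y where y: "y \<in> ?Q" "x = - y" by blast
    from y obtain u where u: "y = u^2" "u \<noteq> 0" unfolding sqs_def by auto
    have "s^2 = - (u^2)" using s y u by simp
    hence "(s / u)^2 = -1" using u by (simp add: power_divide)
    thus False using False by blast
  qed
  have cQ: "CARD('a) - 1 = 2 * card ?Q" by (rule card_sqs[OF odd])
  have un: "?Q \<union> uminus ` ?Q = UNIV - {0}"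
  proof (rule card_subset_eq)
    show "?Q \<union> uminus ` ?Q \<subseteq> UNIV - {0}" unfolding sqs_def by auto
    have "card (?Q \<union> uminus ` ?Q) = card ?Q + card (uminus ` ?Q)"
      using disj by (intro card_Un_disjoint) auto
    also have "card (uminus ` ?Q) = card ?Q" by (rule card_image) (simp add: inj_on_def)
    finally show "card (?Q \<union> uminus ` ?Q) = card (UNIV - {0::'a})" using cQ by simp
  qed simp
  have "gs t + gs (-t) = 2 + 2 * ((\<Sum>c\<in>?Q. canon_char (t * c)) + (\<Sum>c\<in>?Q. canon_char (- t * c)))"
    unfolding gs_Q[OF odd] by (simp add: algebra_simps)
  also have "(\<Sum>c\<in>?Q. canon_char (- t * c)) = (\<Sum>c\<in>uminus ` ?Q. canon_char (t * c))"
    by (subst sum.reindex) (auto simp: inj_on_def)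
  also have "(\<Sum>c\<in>?Q. canon_char (t * c)) + \<dots> = (\<Sum>c\<in>UNIV - {0}. canon_char (t * c))"
    unfolding un[symmetric] by (rule sum.union_disjoint[symmetric]) (use disj in auto)
  also have "\<dots> = (\<Sum>c\<in>UNIV. canon_char (t * c)) - canon_char (t * 0)"
    by (subst sum.remove[of UNIV 0]) auto
  also have "\<dots> = -1" using t by (simp add: canon_char_orth)
  finally have "gs t + gs (-t) = 0" by simp
  hence "gs (-t) = - gs t" by (metis add.commute eq_neg_iff_add_eq_0)
  hence "gs t ^ 2 = - (gs t * gs (-t))" by (simp add: power2_eq_square)
  then show ?thesis using gs_prod[OF odd t] False by simp
qed



lemma bij_vec_nth: "bij (vec_nth :: 'a ^ 'n \<Rightarrow> ('n \<Rightarrow> 'a))"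
  by (intro bij_betwI[of _ _ _ vec_lambda]) (auto simp: vec_eq_iff)

lemma sum_vec_prod:
  fixes f :: "'n::finite \<Rightarrow> 'a::finite \<Rightarrow> 'b::comm_semiring_1"
  shows "(\<Sum>v::'a^'n\<in>UNIV. \<Prod>i\<in>UNIV. f i (v $ i)) = (\<Prod>i\<in>UNIV. \<Sum>s\<in>UNIV. f i s)"
proof -
  have "(\<Prod>i\<in>UNIV. \<Sum>s\<in>UNIV. f i s) = (\<Sum>g\<in>PiE UNIV (\<lambda>_. UNIV). \<Prod>i\<in>UNIV. f i (g i))"
    by (rule prod_sum_PiE) auto
  also have "\<dots> = (\<Sum>g\<in>UNIV. \<Prod>i\<in>UNIV. f i (g i))" by (simp add: PiE_UNIV)
  also have "\<dots> = (\<Sum>v::'a^'n\<in>UNIV. \<Prod>i\<in>UNIV. f i (v $ i))"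
    by (rule sum.reindex_bij_betw[OF bij_vec_nth, symmetric])
  finally show ?thesis ..
qed

lemma char_vec:
  fixes m u :: "'a::{field,finite} ^ 'n::finite"
  shows "canon_char (t * qnorm m + dotp m u) = (\<Prod>i\<in>UNIV. canon_char (t * (m $ i)^2 + m $ i * u $ i))"
proof -
  have "t * qnorm m + dotp m u = (\<Sum>i\<in>UNIV. t * (m $ i)^2 + m $ i * u $ i)"
    unfolding qnorm_def dotp_def by (simp add: sum_distrib_left sum.distrib)
  thus ?thesis by (simp add: canon_char_sum)
qed

lemma gauss_shift:
  fixes t b :: "'a::{field,finite}"
  assumes odd: "odd CARD('a)" and t: "t \<noteq> 0"
  shows "(\<Sum>s\<in>UNIV. canon_char (t * s^2 + s * b)) = canon_char (- (b^2 / (4 * t))) * gs t"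
proof -
  have tw: "(2::'a) \<noteq> 0" by (rule two_nz[OF odd])
  have tw4: "(4::'a) \<noteq> 0" by (rule tw4[OF tw])
  have tw8: "(8::'a) \<noteq> 0"
  proof -
    have e: "(8::'a) = 2^3" by simp
    show ?thesis unfolding e by (rule power_not_zero[OF tw])
  qed
  have tw32: "(32::'a) \<noteq> 0"
  proof -
    have e: "(32::'a) = 2^5" by simp
    show ?thesis unfolding e by (rule power_not_zero[OF tw])
  qed
  define c where "c = b / (2 * t)"
  have bi: "bij (\<lambda>s::'a. s - c)" by (intro bij_betw_byWitness[of _ "\<lambda>s. s + c"]) auto
  have "(\<Sum>s\<in>UNIV. canon_char (t * s^2 + s * b)) = (\<Sum>s\<in>UNIV. canon_char (t * (s - c)^2 + (s - c) * b))"
    by (rule sum_bij_UNIV[OF bi, where f = "\<lambda>s. canon_char (t * s^2 + s * b)", symmetric])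
  also have "\<dots> = (\<Sum>s\<in>UNIV. canon_char (t * s^2) * canon_char (- (b^2 / (4 * t))))"
  proof (intro sum.cong refl)
    fix s
    have "t * (s - c)^2 + (s - c) * b = t * s^2 + (- (b^2 / (4 * t)))"
      unfolding c_def using t tw tw4 tw8 tw32 by (simp add: field_simps power2_eq_square)
    thus "canon_char (t * (s - c)^2 + (s - c) * b) = canon_char (t * s^2) * canon_char (- (b^2 / (4 * t)))"
      by (simp only: canon_char_add)
  qed
  also have "\<dots> = canon_char (- (b^2 / (4 * t))) * gs t"
    unfolding gs_def by (simp add: sum_distrib_right mult.commute)
  finally show ?thesis .
qed

lemma kernel_nz:
  fixes u :: "'a::{field,finite} ^ 'n::finite"
  assumes odd: "odd CARD('a)" and t: "t \<noteq> 0"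
  shows "(\<Sum>m::'a^'n\<in>UNIV. canon_char (t * qnorm m + dotp m u)) = gs t ^ CARD('n) * canon_char (- (qnorm u / (4 * t)))"
proof -
  have "(\<Sum>m::'a^'n\<in>UNIV. canon_char (t * qnorm m + dotp m u))
      = (\<Sum>m::'a^'n\<in>UNIV. \<Prod>i\<in>UNIV. canon_char (t * (m $ i)^2 + m $ i * u $ i))"
    by (simp only: char_vec)
  also have "\<dots> = (\<Prod>i\<in>UNIV. \<Sum>s\<in>UNIV. canon_char (t * s^2 + s * u $ i))"
    by (rule sum_vec_prod[where f = "\<lambda>i s. canon_char (t * s^2 + s * u $ i)"])
  also have "\<dots> = (\<Prod>i\<in>(UNIV::'n set). canon_char (- ((u $ i)^2 / (4 * t))) * gs t)"
    by (simp only: gauss_shift[OF odd t])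
  also have "\<dots> = (\<Prod>i\<in>(UNIV::'n set). canon_char (- ((u $ i)^2 / (4 * t)))) * gs t ^ CARD('n)"
    by (simp add: prod.distrib)
  also have "(\<Prod>i\<in>(UNIV::'n set). canon_char (- ((u $ i)^2 / (4 * t)))) = canon_char (- (qnorm u / (4 * t)))"
    unfolding qnorm_def canon_char_sum[symmetric] by (simp add: sum_divide_distrib sum_negf)
  finally show ?thesis by (simp add: mult.commute)
qed

lemma kernel_z:
  fixes u :: "'a::{field,finite} ^ 'n::finite"
  shows "(\<Sum>m::'a^'n\<in>UNIV. canon_char (dotp m u)) = (if u = 0 then of_nat CARD('a) ^ CARD('n) else 0)"
proof -
  have "(\<Sum>m::'a^'n\<in>UNIV. canon_char (dotp m u)) = (\<Sum>m::'a^'n\<in>UNIV. \<Prod>i\<in>UNIV. canon_char (u $ i * m $ i))"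
    unfolding dotp_def canon_char_sum by (simp add: mult.commute)
  also have "\<dots> = (\<Prod>i\<in>UNIV. \<Sum>s\<in>UNIV. canon_char (u $ i * s))"
    by (rule sum_vec_prod[where f = "\<lambda>i s. canon_char (u $ i * s)"])
  also have "\<dots> = (\<Prod>i\<in>(UNIV::'n set). if u $ i = 0 then of_nat CARD('a) else 0)"
    by (simp only: canon_char_orth)
  also have "\<dots> = (if u = 0 then of_nat CARD('a) ^ CARD('n) else 0)"
  proof (cases "u = 0")
    case True thus ?thesis by simp
  next
    case False
    then obtain i where "u $ i \<noteq> 0" by (auto simp: vec_eq_iff)
    thus ?thesis using False by (intro trans[OF prod_zero]) auto
  qed
  finally show ?thesis .
qed



definition gam :: "'a::{field,finite} itself \<Rightarrow> complex" where
  "gam _ = (if \<exists>i::'a. i^2 = -1 then of_nat CARD('a) else - of_nat CARD('a))"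

lemma sum_inv_char:
  fixes c :: "'a::{field,finite}"
  assumes odd: "odd CARD('a)"
  shows "(\<Sum>t\<in>UNIV-{0}. canon_char (- (c / (4 * t)))) = (if c = 0 then of_nat CARD('a) else 0) - 1"
proof -
  have tw: "(2::'a) \<noteq> 0" by (rule two_nz[OF odd])
  have tw4: "(4::'a) \<noteq> 0" by (rule tw4[OF tw])
  define \<phi> where "\<phi> = (\<lambda>t::'a. - inverse (4 * t))"
  have inv: "\<phi> (\<phi> a) = a" if "a \<noteq> 0" for a
    unfolding \<phi>_def using that tw4 by (simp add: inverse_mult_distrib)
  have nz: "\<phi> a \<noteq> 0" if "a \<noteq> 0" for a
    unfolding \<phi>_def using that tw4 by simp
  have e: "c * \<phi> a = - (c / (4 * a))" for a
    unfolding \<phi>_def by (simp add: inverse_eq_divide)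
  have "(\<Sum>t\<in>UNIV-{0}. canon_char (- (c / (4 * t)))) = (\<Sum>s\<in>UNIV-{0}. canon_char (c * s))"
  proof (rule sum.reindex_bij_witness[of _ \<phi> \<phi>])
    fix a :: 'a assume a: "a \<in> UNIV - {0}"
    show "\<phi> (\<phi> a) = a" using a inv by simp
    show "\<phi> a \<in> UNIV - {0}" using a nz by simp
    show "canon_char (c * \<phi> a) = canon_char (- (c / (4 * a)))" by (simp only: e)
  next
    fix a :: 'a assume a: "a \<in> UNIV - {0}"
    show "\<phi> (\<phi> a) = a" using a inv by simp
    show "\<phi> a \<in> UNIV - {0}" using a nz by simp
  qed
  also have "\<dots> = (\<Sum>s\<in>UNIV. canon_char (c * s)) - canon_char (c * 0)"
    by (subst sum.remove[of UNIV 0]) auto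
  also have "\<dots> = (if c = 0 then of_nat CARD('a) else 0) - 1"
    by (simp only: canon_char_orth mult_zero_right canon_char_0)
  finally show ?thesis .
qed

lemma ind_char:
  fixes m u :: "'a::{field,finite} ^ 'n::finite"
  shows "(if qnorm m = 0 then 1 else 0) * canon_char (dotp m u)
       = (\<Sum>t\<in>UNIV. canon_char (t * qnorm m + dotp m u)) / of_nat CARD('a)"
proof -
  have "(\<Sum>t\<in>UNIV. canon_char (t * qnorm m + dotp m u)) = (\<Sum>t\<in>UNIV. canon_char (qnorm m * t) * canon_char (dotp m u))"
    by (intro sum.cong refl) (simp only: canon_char_add mult.commute[of _ "qnorm m"])
  also have "\<dots> = (\<Sum>t\<in>UNIV. canon_char (qnorm m * t)) * canon_char (dotp m u)"
    by (rule sum_distrib_right[symmetric])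
  also have "\<dots> = (if qnorm m = 0 then of_nat CARD('a) else 0) * canon_char (dotp m u)"
    by (simp only: canon_char_orth)
  finally show ?thesis by simp
qed

lemma W_formula:
  fixes u :: "'a::{field,finite} ^ 'n::finite"
  assumes odd: "odd CARD('a)" and d: "CARD('n) = 2 * k"
  shows "(\<Sum>m\<in>{m::'a^'n. qnorm m = 0}. canon_char (dotp m u))
    = ((if u = 0 then of_nat CARD('a) ^ CARD('n) else 0)
       + gam TYPE('a) ^ k * ((if qnorm u = 0 then of_nat CARD('a) else 0) - 1)) / of_nat CARD('a)"
proof -
  let ?q = "of_nat CARD('a) :: complex"
  have "(\<Sum>m\<in>{m::'a^'n. qnorm m = 0}. canon_char (dotp m u))
      = (\<Sum>m\<in>UNIV. if qnorm m = 0 then canon_char (dotp m u) else 0)"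
  proof -
    have "{m::'a^'n. qnorm m = 0} = {m \<in> UNIV. qnorm m = 0}" by simp
    thus ?thesis by (simp only: sum.inter_filter[OF finite_class.finite_UNIV])
  qed
  also have "\<dots> = (\<Sum>m\<in>UNIV. (if qnorm m = 0 then 1 else 0) * canon_char (dotp m u))"
    by (intro sum.cong refl) simp
  also have "\<dots> = (\<Sum>m\<in>UNIV. (\<Sum>t\<in>UNIV. canon_char (t * qnorm m + dotp m u)) / ?q)"
    by (simp only: ind_char)
  also have "\<dots> = (\<Sum>m\<in>UNIV. \<Sum>t\<in>UNIV. canon_char (t * qnorm m + dotp m u)) / ?q"
    by (rule sum_divide_distrib[symmetric])
  also have "(\<Sum>m\<in>UNIV. \<Sum>t\<in>UNIV. canon_char (t * qnorm m + dotp m u))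
      = (\<Sum>t\<in>UNIV. \<Sum>m\<in>UNIV. canon_char (t * qnorm m + dotp m u))"
    by (rule sum.swap)
  also have "\<dots> = (\<Sum>m\<in>UNIV. canon_char (0 * qnorm m + dotp m u))
      + (\<Sum>t\<in>UNIV-{0}. \<Sum>m\<in>UNIV. canon_char (t * qnorm m + dotp m u))"
    by (subst sum.remove[of UNIV 0]) auto
  also have "(\<Sum>m\<in>UNIV. canon_char (0 * qnorm m + dotp m u)) = (if u = 0 then ?q ^ CARD('n) else 0)"
  proof -
    have "(\<Sum>m\<in>UNIV. canon_char (0 * qnorm m + dotp m u)) = (\<Sum>m::'a^'n\<in>UNIV. canon_char (dotp m u))"
      by (simp only: mult_zero_left add_0_left)
    thus ?thesis by (simp only: kernel_z)
  qed
  also have "(\<Sum>t\<in>UNIV-{0}. \<Sum>m\<in>UNIV. canon_char (t * qnorm m + dotp m u))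
      = (\<Sum>t\<in>UNIV-{0}. gam TYPE('a) ^ k * canon_char (- (qnorm u / (4 * t))))"
  proof (intro sum.cong refl)
    fix t :: 'a assume "t \<in> UNIV - {0}"
    hence t: "t \<noteq> 0" by simp
    have "gs t ^ CARD('n) = (gs t ^ 2) ^ k" unfolding d by (simp only: power_mult)
    also have "\<dots> = gam TYPE('a) ^ k" unfolding gs_sq[OF odd t] gam_def by (rule refl)
    finally have g: "gs t ^ CARD('n) = gam TYPE('a) ^ k" .
    show "(\<Sum>m\<in>UNIV. canon_char (t * qnorm m + dotp m u)) = gam TYPE('a) ^ k * canon_char (- (qnorm u / (4 * t)))"
      by (simp only: kernel_nz[OF odd t] g)
  qed
  also have "\<dots> = gam TYPE('a) ^ k * (\<Sum>t\<in>UNIV-{0}. canon_char (- (qnorm u / (4 * t))))"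
    by (rule sum_distrib_left[symmetric])
  also have "\<dots> = gam TYPE('a) ^ k * ((if qnorm u = 0 then ?q else 0) - 1)"
    by (simp only: sum_inv_char[OF odd])
  finally show ?thesis .
qed



lemma qnorm_sym: "qnorm (x - y) = qnorm (y - (x :: 'a::{field,finite} ^ 'n::finite))"
  unfolding qnorm_def by (intro sum.cong refl) (simp add: power2_commute)

lemma dotp_diff: "dotp m (y - x) = - dotp m x + dotp m (y :: 'a::{field,finite} ^ 'n::finite)"
  unfolding dotp_def by (simp add: right_diff_distrib sum_subtractf)

lemma ZR_sum:
  fixes A :: "('a::{field,finite} ^ 'n::finite) set"
  shows "(of_nat (ZR A) :: complex) = (\<Sum>x\<in>A. \<Sum>y\<in>A. if qnorm (y - x) = 0 then 1 else 0)"
proof -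
  have e: "{(x, y). x \<in> A \<and> y \<in> A \<and> qnorm (x - y) = 0} = {p \<in> A \<times> A. qnorm (snd p - fst p) = 0}"
    by (auto simp: qnorm_sym)
  have "(of_nat (ZR A) :: complex) = (\<Sum>p\<in>{p \<in> A \<times> A. qnorm (snd p - fst p) = 0}. 1)"
    unfolding ZR_def e by simp
  also have "\<dots> = (\<Sum>p\<in>A \<times> A. if qnorm (snd p - fst p) = 0 then 1 else 0)"
    by (rule sum.inter_filter) simp
  also have "\<dots> = (\<Sum>(x,y)\<in>A \<times> A. if qnorm (y - x) = 0 then 1 else 0)"
    by (simp add: case_prod_beta)
  also have "\<dots> = (\<Sum>x\<in>A. \<Sum>y\<in>A. if qnorm (y - x) = 0 then 1 else 0)"
    by (rule sum.cartesian_product[symmetric])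
  finally show ?thesis .
qed

lemma Fsq:
  fixes A :: "('a::{field,finite} ^ 'n::finite) set"
  shows "complex_of_real (real CARD('a) ^ (2 * CARD('n)) * (cmod (ff_fourier A m))^2)
       = (\<Sum>x\<in>A. \<Sum>y\<in>A. canon_char (dotp m (y - x)))"
proof -
  define F where "F = (\<Sum>x\<in>A. canon_char (- dotp m x))"
  have q0: "real CARD('a) \<noteq> 0" by simp
  have "cmod (ff_fourier A m) = cmod F / real CARD('a) ^ CARD('n)"
    unfolding ff_fourier_def F_def by (simp add: norm_mult norm_divide norm_power)
  hence "real CARD('a) ^ (2 * CARD('n)) * (cmod (ff_fourier A m))^2 = (cmod F)^2"
    using q0 by (simp add: power_divide power_mult[symmetric] mult.commute)
  hence "complex_of_real (real CARD('a) ^ (2 * CARD('n)) * (cmod (ff_fourier A m))^2) = complex_of_real ((cmod F)^2)"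
    by (rule arg_cong)
  also have "\<dots> = F * cnj F" by (rule complex_norm_square)
  also have "F * cnj F = (\<Sum>x\<in>A. \<Sum>y\<in>A. canon_char (- dotp m x) * cnj (canon_char (- dotp m y)))"
    unfolding F_def cnj_sum by (rule sum_product)
  also have "\<dots> = (\<Sum>x\<in>A. \<Sum>y\<in>A. canon_char (dotp m (y - x)))"
  proof (intro sum.cong refl)
    fix x y
    have "cnj (canon_char (- dotp m y)) = canon_char (dotp m y)"
      by (simp add: canon_char_neg)
    thus "canon_char (- dotp m x) * cnj (canon_char (- dotp m y)) = canon_char (dotp m (y - x))"
      by (simp only: dotp_diff canon_char_add)
  qed
  finally show ?thesis .
qed

lemma sum_sum_lin:
  fixes f h :: "'b \<Rightarrow> 'b \<Rightarrow> complex"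
  assumes "finite A"
  shows "(\<Sum>x\<in>A. \<Sum>y\<in>A. (f x y + g * (h x y - 1)) / c)
       = ((\<Sum>x\<in>A. \<Sum>y\<in>A. f x y) + g * ((\<Sum>x\<in>A. \<Sum>y\<in>A. h x y) - of_nat (card A)^2)) / c"
  by (simp add: sum_divide_distrib[symmetric] sum.distrib sum_subtractf sum_distrib_left
      right_diff_distrib power2_eq_square add_divide_distrib diff_divide_distrib)

lemma main_complex:
  fixes A :: "('a::{field,finite} ^ 'n::finite) set"
  assumes odd: "odd CARD('a)" and d: "CARD('n) = 2 * k"
  shows "complex_of_real (real CARD('a) ^ (2 * CARD('n)) * Omega0 A)
    = (of_nat CARD('a) ^ CARD('n) * of_nat (card A)
       + gam TYPE('a) ^ k * (of_nat CARD('a) * of_nat (ZR A) - of_nat (card A)^2)) / of_nat CARD('a)"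
proof -
  let ?q = "of_nat CARD('a) :: complex"
  let ?Z = "{m::'a^'n. qnorm m = 0}"
  have "complex_of_real (real CARD('a) ^ (2 * CARD('n)) * Omega0 A)
      = (\<Sum>m\<in>?Z. complex_of_real (real CARD('a) ^ (2 * CARD('n)) * (cmod (ff_fourier A m))^2))"
    unfolding Omega0_def by (simp only: sum_distrib_left of_real_sum)
  also have "\<dots> = (\<Sum>m\<in>?Z. \<Sum>x\<in>A. \<Sum>y\<in>A. canon_char (dotp m (y - x)))"
    by (simp only: Fsq)
  also have "\<dots> = (\<Sum>x\<in>A. \<Sum>m\<in>?Z. \<Sum>y\<in>A. canon_char (dotp m (y - x)))"
    by (rule sum.swap)
  also have "\<dots> = (\<Sum>x\<in>A. \<Sum>y\<in>A. \<Sum>m\<in>?Z. canon_char (dotp m (y - x)))"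
    by (intro sum.cong refl sum.swap)
  also have "\<dots> = (\<Sum>x\<in>A. \<Sum>y\<in>A. ((if y - x = 0 then ?q ^ CARD('n) else 0)
       + gam TYPE('a) ^ k * ((if qnorm (y - x) = 0 then ?q else 0) - 1)) / ?q)"
    by (simp only: W_formula[OF odd d])
  also have "\<dots> = ((\<Sum>x\<in>A. \<Sum>y\<in>A. if y - x = 0 then ?q ^ CARD('n) else 0)
       + gam TYPE('a) ^ k * ((\<Sum>x\<in>A. \<Sum>y\<in>A. if qnorm (y - x) = 0 then ?q else 0) - of_nat (card A)^2)) / ?q"
    by (rule sum_sum_lin) simp
  also have "(\<Sum>x\<in>A. \<Sum>y\<in>A. if y - x = 0 then ?q ^ CARD('n) else 0) = ?q ^ CARD('n) * of_nat (card A)"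
  proof -
    have "(\<Sum>x\<in>A. \<Sum>y\<in>A. if y - x = 0 then ?q ^ CARD('n) else 0) = (\<Sum>x\<in>A. ?q ^ CARD('n))"
    proof (intro sum.cong refl)
      fix x assume x: "x \<in> A"
      have "(\<Sum>y\<in>A. if y - x = 0 then ?q ^ CARD('n) else 0) = (\<Sum>y\<in>A. if y = x then ?q ^ CARD('n) else 0)"
        by (intro sum.cong refl) simp
      also have "\<dots> = ?q ^ CARD('n)" using x by (simp add: sum.delta)
      finally show "(\<Sum>y\<in>A. if y - x = 0 then ?q ^ CARD('n) else 0) = ?q ^ CARD('n)" .
    qed
    thus ?thesis by (simp add: mult.commute)
  qed
  also have "(\<Sum>x\<in>A. \<Sum>y\<in>A. if qnorm (y - x) = 0 then ?q else 0) = ?q * of_nat (ZR A)"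
  proof -
    have "(\<Sum>x\<in>A. \<Sum>y\<in>A. if qnorm (y - x) = 0 then ?q else 0)
        = (\<Sum>x\<in>A. \<Sum>y\<in>A. ?q * (if qnorm (y - x) = 0 then 1 else 0))"
      by (intro sum.cong refl) simp
    also have "\<dots> = ?q * (\<Sum>x\<in>A. \<Sum>y\<in>A. if qnorm (y - x) = 0 then 1 else 0)"
      by (simp only: sum_distrib_left)
    also have "\<dots> = ?q * of_nat (ZR A)" by (simp only: ZR_sum)
    finally show ?thesis .
  qed
  finally show ?thesis .
qed



lemma final_alg:
  fixes q a R Om e :: real and k :: nat
  assumes q: "q > 0" and k: "k \<ge> 1" and e: "e * e = 1"
    and H: "q ^ (4 * k) * Om = (q ^ (2 * k) * a + e * q ^ k * (q * R - a^2)) / q"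
  shows "R / 2 = a^2 / (2 * q) + e * q ^ (3 * k) / 2 * Om - e * q ^ (k - 1) * a / 2"
proof -
  define Q where "Q = q ^ k"
  have Q: "Q > 0" unfolding Q_def using q by simp
  have p4: "q ^ (4 * k) = Q^4" "q ^ (2 * k) = Q^2" "q ^ (3 * k) = Q^3"
    unfolding Q_def by (simp_all add: power_mult[symmetric] mult.commute)
  have p1: "q ^ (k - 1) = Q / q" unfolding Q_def using q k
    by (metis power_minus_mult divide_eq_eq less_numeral_extra(3) nonzero_mult_div_cancel_right le_add_diff_inverse2 power_add power_one_right)
  have p0: "q ^ k = Q" unfolding Q_def ..
  have H1: "q * Q^4 * Om = Q^2 * a + e * Q * (q * R - a^2)" using H q unfolding p4 p0 by (simp add: field_simps)
  have "e * (q * Q^4 * Om) = e * (Q^2 * a) + (e * e) * Q * (q * R - a^2)" unfolding H1 by (simp add: algebra_simps)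
  hence H2: "Q * (q * R) = Q * (e * q * Q^3 * Om - e * Q * a + a^2)"
    unfolding e by (simp add: algebra_simps power2_eq_square power3_eq_cube power4_eq_xxxx)
  hence "q * R = e * q * Q^3 * Om - e * Q * a + a^2" using Q by simp
  hence "R = e * Q^3 * Om - e * (Q / q) * a + a^2 / q" using q by (simp add: field_simps)
  thus ?thesis unfolding p4 p1 by (simp add: field_simps)
qed

lemma gen_case:
  fixes A :: "('a::{field,finite} ^ 'n::finite) set"
  assumes odd: "odd CARD('a)" and d: "CARD('n) = 2 * k" and k: "k \<ge> 1"
    and e: "e * e = 1" and g: "gam TYPE('a) ^ k = complex_of_real (e * real CARD('a) ^ k)"
  shows "real (ZR A) / 2 = real (card A)^2 / (2 * real CARD('a))
     + e * real CARD('a) ^ (3 * k) / 2 * Omega0 A - e * real CARD('a) ^ (k - 1) * real (card A) / 2"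
proof (rule final_alg[OF _ k e])
  show "real CARD('a) > 0" by simp
  have "complex_of_real (real CARD('a) ^ (2 * CARD('n)) * Omega0 A)
    = (of_nat CARD('a) ^ CARD('n) * of_nat (card A)
       + gam TYPE('a) ^ k * (of_nat CARD('a) * of_nat (ZR A) - of_nat (card A)^2)) / of_nat CARD('a)"
    by (rule main_complex[OF odd d])
  also have "\<dots> = complex_of_real ((real CARD('a) ^ (2 * k) * real (card A)
       + e * real CARD('a) ^ k * (real CARD('a) * real (ZR A) - real (card A)^2)) / real CARD('a))"
    unfolding g d by simp
  finally have "real CARD('a) ^ (2 * CARD('n)) * Omega0 A = (real CARD('a) ^ (2 * k) * real (card A)
       + e * real CARD('a) ^ k * (real CARD('a) * real (ZR A) - real (card A)^2)) / real CARD('a)"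
    by (simp only: of_real_eq_iff)
  moreover have "2 * CARD('n) = 4 * k" using d by simp
  ultimately show "real CARD('a) ^ (4 * k) * Omega0 A = (real CARD('a) ^ (2 * k) * real (card A)
       + e * real CARD('a) ^ k * (real CARD('a) * real (ZR A) - real (card A)^2)) / real CARD('a)"
    by simp
qed

theorem proposition3p5:
  fixes A :: "('a::{field,finite} ^ 'n::finite) set"
  assumes "odd CARD('a)" and "even CARD('n)"
  shows "(CARD('n) mod 4 = 2 \<and> CARD('a) mod 4 = 3 \<longrightarrow>
            real (ZR A) / 2 = real (card A)^2 / (2 * real CARD('a))
              - real CARD('a) ^ (3 * CARD('n) div 2) / 2 * Omega0 A
              + real CARD('a) ^ ((CARD('n) - 2) div 2) * real (card A) / 2)
       \<and> (CARD('n) mod 4 = 0 \<or> (CARD('n) mod 4 = 2 \<and> CARD('a) mod 4 = 1) \<longrightarrow>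
            real (ZR A) / 2 = real (card A)^2 / (2 * real CARD('a))
              + real CARD('a) ^ (3 * CARD('n) div 2) / 2 * Omega0 A
              - real CARD('a) ^ ((CARD('n) - 2) div 2) * real (card A) / 2)"
proof -
  note odd = assms(1)
  obtain k where d: "CARD('n) = 2 * k" using assms(2) by (elim evenE)
  have k: "k \<ge> 1" using d finite_UNIV_card_ge_0[where 'a='n] by simp
  have e3: "3 * CARD('n) div 2 = 3 * k" using d by simp
  have e2: "(CARD('n) - 2) div 2 = k - 1" using d by simp
  show ?thesis
  proof (intro conjI impI)
    assume c: "CARD('n) mod 4 = 2 \<and> CARD('a) mod 4 = 3"
    have ko: "odd k" using c d by presburger
    have ni: "\<not> (\<exists>i::'a. i^2 = -1)" using c minus1_sq_iff[OF odd] by simp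
    have g: "gam TYPE('a) ^ k = complex_of_real ((-1) * real CARD('a) ^ k)"
      unfolding gam_def using ni ko by simp
    show "real (ZR A) / 2 = real (card A)^2 / (2 * real CARD('a))
              - real CARD('a) ^ (3 * CARD('n) div 2) / 2 * Omega0 A
              + real CARD('a) ^ ((CARD('n) - 2) div 2) * real (card A) / 2"
      using gen_case[OF odd d k _ g, of A] unfolding e3 e2 by simp
  next
    assume c: "CARD('n) mod 4 = 0 \<or> (CARD('n) mod 4 = 2 \<and> CARD('a) mod 4 = 1)"
    have g: "gam TYPE('a) ^ k = complex_of_real (1 * real CARD('a) ^ k)"
    proof (cases "CARD('n) mod 4 = 0")
      case True
      hence ke: "even k" using d by presburger
      show ?thesis unfolding gam_def using ke by simp
    next
      case False
      hence "CARD('a) mod 4 = 1" using c by simp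
      hence "\<exists>i::'a. i^2 = -1" using minus1_sq_iff[OF odd] by simp
      thus ?thesis unfolding gam_def by simp
    qed
    show "real (ZR A) / 2 = real (card A)^2 / (2 * real CARD('a))
              + real CARD('a) ^ (3 * CARD('n) div 2) / 2 * Omega0 A
              - real CARD('a) ^ ((CARD('n) - 2) div 2) * real (card A) / 2"
      using gen_case[OF odd d k _ g, of A] unfolding e3 e2 by simp
  qed
qed


end
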